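(* Let $G$ be the Cayley graph of a finitely generated group with respect to a finite symmetric generating set, and suppose its volume growth satisfies $v(n)\succeq e^{n^{\alpha}}$ for some $0<\alpha<1$. Fix any $\beta<\frac{\alpha}{\alpha+1}$, and let $\{f(n)\}$ be a sequence of nonnegative integers with $f(n)=o(e^{n^{\beta}})$. Then $G$ does not satisfy the $\{f(n)\}$-containment property.
   Context: The volume growth is $v(n)=|B_n(\mathrm{id})|$, the number of group elements at word distance at most $n$ from the identity. For functions $g,h$, $g\preceq h$ means there is $C>0$ with $g(x)\leq C h(Cx)$ for all $x$, and $h\succeq g$ means $g\preceq h$. Firefighter process on a graph $G$ with a sequence of integers $\{f(n)\}$: an initial fire occupies a finite set of vertices; at each time $n\geq 1$, at most $f(n)$ vertices that are not on fire become protected, and then the fire spreads to all unprotected neighbours of vertices on fire; once a vertex is protected or on fire it stays so forever. $G$ has the $\{f(n)\}$-containment property if for every finite initial fire there is a protection strategy (protecting at most $f(n)$ vertices at time $n$) such that the set of burning vertices is eventually constant. *)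

theory Defs
  imports "HOL-Algebra.Algebra" "HOL-Library.Landau_Symbols"
begin

definition cayley_adj :: "('a, 'b) monoid_scheme \<Rightarrow> 'a set \<Rightarrow> 'a \<Rightarrow> 'a \<Rightarrow> bool" where
  "cayley_adj G S x y \<longleftrightarrow> x \<in> carrier G \<and> (\<exists>s\<in>S. y = x \<otimes>\<^bsub>G\<^esub> s)"

primrec word_ball :: "('a, 'b) monoid_scheme \<Rightarrow> 'a set \<Rightarrow> nat \<Rightarrow> 'a set" where
  "word_ball G S 0 = {\<one>\<^bsub>G\<^esub>}"
| "word_ball G S (Suc n) = word_ball G S n \<union> {x \<otimes>\<^bsub>G\<^esub> s | x s. x \<in> word_ball G S n \<and> s \<in> S}"

definition vol_growth :: "('a, 'b) monoid_scheme \<Rightarrow> 'a set \<Rightarrow> nat \<Rightarrow> nat" where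
  "vol_growth G S n = card (word_ball G S n)"

text \<open>Burning set after time n, given initial fire F and protection sets p 1, p 2, ...
  (p 0 is unused).\<close>
primrec burning :: "('a, 'b) monoid_scheme \<Rightarrow> 'a set \<Rightarrow> 'a set \<Rightarrow> (nat \<Rightarrow> 'a set) \<Rightarrow> nat \<Rightarrow> 'a set" where
  "burning G S F p 0 = F"
| "burning G S F p (Suc n) = burning G S F p n \<union>
     {y. (\<exists>x\<in>burning G S F p n. cayley_adj G S x y) \<and> y \<notin> (\<Union>k\<in>{1..Suc n}. p k)}"

definition valid_strategy :: "('a, 'b) monoid_scheme \<Rightarrow> 'a set \<Rightarrow> (nat \<Rightarrow> nat) \<Rightarrow> 'a set \<Rightarrow> (nat \<Rightarrow> 'a set) \<Rightarrow> bool" where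
  "valid_strategy G S f F p \<longleftrightarrow>
     (\<forall>n\<ge>1. p n \<subseteq> carrier G \<and> finite (p n) \<and> card (p n) \<le> f n
            \<and> p n \<inter> burning G S F p (n - 1) = {})"

definition containment_property :: "('a, 'b) monoid_scheme \<Rightarrow> 'a set \<Rightarrow> (nat \<Rightarrow> nat) \<Rightarrow> bool" where
  "containment_property G S f \<longleftrightarrow>
     (\<forall>F. finite F \<and> F \<subseteq> carrier G \<longrightarrow>
        (\<exists>p. valid_strategy G S f F p \<and> (\<exists>N. \<forall>n\<ge>N. burning G S F p n = burning G S F p N)))"

end

theory Submission
  imports Defs "HOL-Real_Asymp.Real_Asymp"
begin


lemma powr_succ_bound:
  fixes m g :: real assumes "1 \<le> m" "0 < g" "g \<le> 1"
  shows "(m+1) powr g \<le> m powr g + m powr (g - 1)"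
proof -
  have "(m+1) = m * (1 + 1/m)" using assms by (simp add: field_simps)
  hence "(m+1) powr g = m powr g * (1 + 1/m) powr g" using assms by (simp add: powr_mult)
  also have "(1 + 1/m) powr g \<le> (1 + 1/m) powr 1"
    using assms by (intro powr_mono) auto
  also have "(1 + 1/m) powr 1 = 1 + 1/m" using assms by simp
  also have "m powr g * (1 + 1/m) = m powr g + m powr g / m" using assms by (simp add: field_simps)
  also have "m powr g / m = m powr (g - 1)" using assms by (simp add: powr_diff)
  finally show ?thesis using assms by simp
qed

lemma exp_minus_one_bound:
  fixes d :: real assumes "0 \<le> d" "d \<le> 1"
  shows "exp d - 1 \<le> exp 1 * d"
proof -
  have "1 - d \<le> exp (-d)" using exp_ge_add_one_self[of "-d"] by simp
  hence "exp d * (1 - d) \<le> exp d * exp (-d)" by (intro mult_left_mono) auto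
  hence "exp d - 1 \<le> d * exp d" by (simp add: exp_minus field_simps)
  also have "\<dots> \<le> d * exp 1" using assms by (intro mult_left_mono) auto
  finally show ?thesis by (simp add: mult.commute)
qed

lemma analytic:
  fixes a g b C K :: real
  assumes a: "0 < a" and g: "0 < g" "g < 1" "g - 1 + g/a < 0" and b: "0 < b" "b < g" and C: "C > 0"
  shows "eventually (\<lambda>m. exp ((m+1) powr g) - exp (m powr g) + K + (m+1) * exp ((m+1) powr b)
            \<le> exp (m powr g) / (2*C*((2*(m+1) powr g) powr (1/a) + 1)) \<and> ln (2*C) \<le> (m+1) powr g
            \<and> 1 \<le> m) at_top"
proof -
  define D where "D = (\<lambda>m::real. (2*(m+1) powr g) powr (1/a) + 1)"
  have L1: "((\<lambda>m::real. m powr (g - 1) * ((2*(m+1) powr g) powr (1/a) + 1)) \<longlongrightarrow> 0) at_top"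
    using a g by real_asymp
  have L2: "((\<lambda>m::real. exp (- (m powr g)) * ((2*(m+1) powr g) powr (1/a) + 1)) \<longlongrightarrow> 0) at_top"
    using a g by real_asymp
  have L3: "((\<lambda>m::real. (m+1) * exp ((m+1) powr b - m powr g) * ((2*(m+1) powr g) powr (1/a) + 1)) \<longlongrightarrow> 0) at_top"
    using a g b by real_asymp
  define h where "h = (\<lambda>m. 2*C*(exp 1 * (m powr (g - 1) * D m) + K * (exp (- (m powr g)) * D m)
        + (m+1) * exp ((m+1) powr b - m powr g) * D m))"
  have "(h \<longlongrightarrow> 2*C*(exp 1 * 0 + K * 0 + 0)) at_top"
    unfolding h_def D_def by (intro tendsto_intros L1 L2 L3)
  hence "eventually (\<lambda>m. h m < 1) at_top" by (intro order_tendstoD) auto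
  moreover have "eventually (\<lambda>m::real. ln (2*C) \<le> (m+1) powr g) at_top"
  proof -
    have "filterlim (\<lambda>m::real. (m+1) powr g) at_top at_top" using g by real_asymp
    thus ?thesis by (rule filterlim_at_top[THEN iffD1, rule_format])
  qed
  moreover have "eventually (\<lambda>m::real. 1 \<le> m) at_top" by (rule eventually_ge_at_top)
  ultimately show ?thesis
  proof eventually_elim
    case (elim m)
    have m1: "1 \<le> m" using elim by simp
    have Dpos: "D m > 0" unfolding D_def by (simp add: add_nonneg_pos)
    define d where "d = m powr (g - 1)"
    have d0: "0 \<le> d" unfolding d_def by simp
    have d1: "d \<le> 1" unfolding d_def using m1 g powr_mono[of "g - 1" 0 m] by simp
    have "exp ((m+1) powr g) \<le> exp (m powr g + d)"
      unfolding d_def using powr_succ_bound[of m g] m1 g by simp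
    also have "\<dots> = exp (m powr g) * exp d" by (simp add: exp_add)
    finally have "exp ((m+1) powr g) - exp (m powr g) \<le> exp (m powr g) * (exp d - 1)"
      by (simp add: algebra_simps)
    also have "\<dots> \<le> exp (m powr g) * (exp 1 * d)"
      by (intro mult_left_mono exp_minus_one_bound d0 d1) auto
    finally have A: "exp ((m+1) powr g) - exp (m powr g) \<le> exp (m powr g) * (exp 1 * d)" .
    have B: "(m+1) * exp ((m+1) powr b) = exp (m powr g) * ((m+1) * exp ((m+1) powr b - m powr g))"
      by (simp add: exp_diff)
    have Kq: "exp (m powr g) * (K * exp (- (m powr g))) = K" by (simp add: exp_minus)
    have "exp ((m+1) powr g) - exp (m powr g) + K + (m+1) * exp ((m+1) powr b)
        \<le> exp (m powr g) * (exp 1 * d + K * exp (- (m powr g)) + (m+1) * exp ((m+1) powr b - m powr g))"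
    proof -
      have "exp (m powr g) * (exp 1 * d + K * exp (- (m powr g)) + (m+1) * exp ((m+1) powr b - m powr g))
         = exp (m powr g) * (exp 1 * d) + exp (m powr g) * (K * exp (- (m powr g))) + exp (m powr g) * ((m+1) * exp ((m+1) powr b - m powr g))"
        by (simp only: distrib_left)
      thus ?thesis using A B Kq by linarith
    qed
    also have "\<dots> = exp (m powr g) * h m / (2*C*D m)"
      unfolding h_def d_def using Dpos C by (simp add: field_simps)
    also have "\<dots> \<le> exp (m powr g) * 1 / (2*C*D m)"
      using elim Dpos C by (intro divide_right_mono mult_left_mono) auto
    finally show ?case using elim unfolding D_def by simp
  qed
qed



definition bdry :: "('a, 'b) monoid_scheme \<Rightarrow> 'a set \<Rightarrow> 'a set \<Rightarrow> 'a set" where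
  "bdry G S A = {x \<otimes>\<^bsub>G\<^esub> s | x s. x \<in> A \<and> s \<in> S} - A"

lemma prod_img: "{x \<otimes>\<^bsub>G\<^esub> s | x s. x \<in> A \<and> s \<in> S} = (\<lambda>(x,s). x \<otimes>\<^bsub>G\<^esub> s) ` (A \<times> S)"
  by auto

lemma bdry_finite: "finite A \<Longrightarrow> finite S \<Longrightarrow> finite (bdry G S A)"
  unfolding bdry_def prod_img by auto

lemma card_filter_sum: "finite A \<Longrightarrow> card {x\<in>A. P x} = (\<Sum>x\<in>A. if P x then 1 else 0::nat)"
  by (simp add: sum.inter_filter[symmetric])

context group begin

lemma lcancel: "x \<in> carrier G \<Longrightarrow> a \<in> carrier G \<Longrightarrow> b \<in> carrier G \<Longrightarrow> x \<otimes> a = x \<otimes> b \<Longrightarrow> a = b"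
  by (metis inv_closed l_inv l_one m_assoc)

lemma wb_carrier: "S \<subseteq> carrier G \<Longrightarrow> word_ball G S n \<subseteq> carrier G"
  by (induction n) auto

lemma wb_finite: "finite S \<Longrightarrow> finite (word_ball G S n)"
  by (induction n) (auto simp: prod_img)

lemma wb_mono: "m \<le> n \<Longrightarrow> word_ball G S m \<subseteq> word_ball G S n"
  by (induction n rule: dec_induct) auto

lemma exit_count:
  assumes S: "S \<subseteq> carrier G" "finite S" and A: "A \<subseteq> carrier G" "finite A"
  shows "g \<in> word_ball G S r \<Longrightarrow> card {x\<in>A. x \<otimes> g \<notin> A} \<le> r * card (bdry G S A)"
proof (induction r arbitrary: g)
  case 0
  then have "{x\<in>A. x \<otimes> g \<notin> A} = {}" using A by auto
  then have "card {x\<in>A. x \<otimes> g \<notin> A} = 0" by (metis card.empty)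
  then show ?case by simp
next
  case (Suc r)
  show ?case
  proof (cases "g \<in> word_ball G S r")
    case True
    then have "card {x\<in>A. x \<otimes> g \<notin> A} \<le> r * card (bdry G S A)" by (rule Suc.IH)
    also have "\<dots> \<le> Suc r * card (bdry G S A)" by simp
    finally show ?thesis .
  next
    case False
    then obtain h s where hs: "g = h \<otimes> s" "h \<in> word_ball G S r" "s \<in> S" using Suc.prems by auto
    have hc: "h \<in> carrier G" using hs wb_carrier S by auto
    have sc: "s \<in> carrier G" using hs S by auto
    have sub: "{x\<in>A. x \<otimes> g \<notin> A} \<subseteq> {x\<in>A. x \<otimes> h \<notin> A} \<union> {x\<in>A. x \<otimes> h \<in> A \<and> x \<otimes> h \<otimes> s \<notin> A}"
      using hs A hc sc by (auto simp: m_assoc)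
    have c2: "card {x\<in>A. x \<otimes> h \<in> A \<and> x \<otimes> h \<otimes> s \<notin> A} \<le> card (bdry G S A)"
    proof (rule card_inj_on_le[where f = "\<lambda>x. x \<otimes> h \<otimes> s"])
      show "inj_on (\<lambda>x. x \<otimes> h \<otimes> s) {x \<in> A. x \<otimes> h \<in> A \<and> x \<otimes> h \<otimes> s \<notin> A}"
      proof (rule inj_onI)
        fix x y assume x: "x \<in> {x \<in> A. x \<otimes> h \<in> A \<and> x \<otimes> h \<otimes> s \<notin> A}"
          and y: "y \<in> {x \<in> A. x \<otimes> h \<in> A \<and> x \<otimes> h \<otimes> s \<notin> A}" and e: "x \<otimes> h \<otimes> s = y \<otimes> h \<otimes> s"
        have xc: "x \<in> carrier G" and yc: "y \<in> carrier G" using x y A by auto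
        have "x \<otimes> h = y \<otimes> h" using e xc yc hc sc by simp
        thus "x = y" using xc yc hc by simp
      qed
      show "(\<lambda>x. x \<otimes> h \<otimes> s) ` {x \<in> A. x \<otimes> h \<in> A \<and> x \<otimes> h \<otimes> s \<notin> A} \<subseteq> bdry G S A"
        unfolding bdry_def using hs by blast
      show "finite (bdry G S A)" using bdry_finite A S by auto
    qed
    have "card {x\<in>A. x \<otimes> g \<notin> A} \<le> card ({x\<in>A. x \<otimes> h \<notin> A} \<union> {x\<in>A. x \<otimes> h \<in> A \<and> x \<otimes> h \<otimes> s \<notin> A})"
      using sub A by (intro card_mono) auto
    also have "\<dots> \<le> card {x\<in>A. x \<otimes> h \<notin> A} + card {x\<in>A. x \<otimes> h \<in> A \<and> x \<otimes> h \<otimes> s \<notin> A}"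
      by (rule card_Un_le)
    also have "\<dots> \<le> r * card (bdry G S A) + card (bdry G S A)"
      using Suc.IH[OF hs(2)] c2 by linarith
    finally show ?thesis by simp
  qed
qed

lemma isoperimetric:
  assumes S: "S \<subseteq> carrier G" "finite S" and A: "A \<subseteq> carrier G" "finite A"
    and V: "2 * card A \<le> vol_growth G S r"
  shows "card A \<le> 2 * r * card (bdry G S A)"
proof -
  define W where "W = word_ball G S r"
  have Wf: "finite W" unfolding W_def using wb_finite S by auto
  have Wc: "W \<subseteq> carrier G" unfolding W_def using wb_carrier S by auto
  have cV: "card W = vol_growth G S r" unfolding W_def vol_growth_def by simp
  define cb where "cb = card (bdry G S A)"
  have "(\<Sum>g\<in>W. card {x\<in>A. x \<otimes> g \<notin> A}) \<le> (\<Sum>g\<in>W. r * cb)"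
    unfolding cb_def W_def by (intro sum_mono exit_count S A) auto
  also have "\<dots> = card W * r * cb" by simp
  finally have up: "(\<Sum>g\<in>W. card {x\<in>A. x \<otimes> g \<notin> A}) \<le> card W * r * cb" .
  have swap: "(\<Sum>g\<in>W. card {x\<in>A. x \<otimes> g \<notin> A}) = (\<Sum>x\<in>A. card {g\<in>W. x \<otimes> g \<notin> A})"
    using A Wf by (simp add: card_filter_sum sum.swap[of _ W A])
  have low: "card W - card A \<le> card {g\<in>W. x \<otimes> g \<notin> A}" if x: "x \<in> A" for x
  proof -
    have xc: "x \<in> carrier G" using x A by auto
    have "card {g\<in>W. x \<otimes> g \<in> A} \<le> card A"
      using A Wc xc by (intro card_inj_on_le[where f = "\<lambda>g. x \<otimes> g"] inj_onI) (auto intro: lcancel)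
    moreover have "card W = card {g\<in>W. x \<otimes> g \<notin> A} + card {g\<in>W. x \<otimes> g \<in> A}"
    proof -
      have "W = {g\<in>W. x \<otimes> g \<notin> A} \<union> {g\<in>W. x \<otimes> g \<in> A}" by auto
      hence "card W = card ({g\<in>W. x \<otimes> g \<notin> A} \<union> {g\<in>W. x \<otimes> g \<in> A})" by simp
      also have "\<dots> = card {g\<in>W. x \<otimes> g \<notin> A} + card {g\<in>W. x \<otimes> g \<in> A}"
        using Wf by (intro card_Un_disjoint) auto
      finally show ?thesis .
    qed
    ultimately show ?thesis by linarith
  qed
  have "card A * (card W - card A) = (\<Sum>x\<in>A. card W - card A)" by simp
  also have "\<dots> \<le> (\<Sum>x\<in>A. card {g\<in>W. x \<otimes> g \<notin> A})" using low by (intro sum_mono) auto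
  finally have key: "card A * (card W - card A) \<le> card W * r * cb" using up swap by linarith
  have "card A * card W \<le> 2 * (card A * (card W - card A))"
  proof -
    have "card W \<le> 2 * (card W - card A)" using V cV by linarith
    hence "card A * card W \<le> card A * (2 * (card W - card A))" by (rule mult_left_mono) simp
    thus ?thesis by (simp add: algebra_simps)
  qed
  also have "\<dots> \<le> 2 * (card W * r * cb)" using key by simp
  finally have "card W * card A \<le> card W * (2 * r * cb)" by (simp add: algebra_simps)
  moreover have "card W > 0"
  proof -
    have "one G \<in> W" unfolding W_def using wb_mono[of 0 r S] by auto
    thus ?thesis using Wf by (auto simp: card_gt_0_iff)
  qed
  ultimately show ?thesis unfolding cb_def by simp
qed

end


context group begin

lemma adj_carrier: "S \<subseteq> carrier G \<Longrightarrow> cayley_adj G S x y \<Longrightarrow> y \<in> carrier G"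
  unfolding cayley_adj_def by auto

lemma burn_carrier: "S \<subseteq> carrier G \<Longrightarrow> F \<subseteq> carrier G \<Longrightarrow> burning G S F p n \<subseteq> carrier G"
  by (induction n) (auto dest: adj_carrier)

lemma burn_finite: assumes "finite F" "finite S" shows "finite (burning G S F p n)"
proof (induction n)
  case 0 then show ?case using assms by simp
next
  case (Suc n)
  have "{y. (\<exists>x\<in>burning G S F p n. cayley_adj G S x y) \<and> y \<notin> (\<Union>k\<in>{1..Suc n}. p k)}
     \<subseteq> (\<lambda>(x,s). x \<otimes> s) ` (burning G S F p n \<times> S)"
    unfolding cayley_adj_def by auto
  moreover have "finite ((\<lambda>(x,s). x \<otimes> s) ` (burning G S F p n \<times> S))" using Suc assms by auto
  ultimately show ?case using Suc by (auto intro: finite_subset)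
qed

lemma burn_mono: "m \<le> n \<Longrightarrow> burning G S F p m \<subseteq> burning G S F p n"
  by (induction n rule: dec_induct) auto

lemma burn_step:
  assumes "S \<subseteq> carrier G" "F \<subseteq> carrier G"
  shows "bdry G S (burning G S F p n) - (\<Union>k\<in>{1..Suc n}. p k) \<subseteq> burning G S F p (Suc n)"
proof
  fix y assume y: "y \<in> bdry G S (burning G S F p n) - (\<Union>k\<in>{1..Suc n}. p k)"
  then obtain x s where xs: "y = x \<otimes> s" "x \<in> burning G S F p n" "s \<in> S" unfolding bdry_def by auto
  have "x \<in> carrier G" using xs(2) burn_carrier[OF assms, of p n] by auto
  hence "cayley_adj G S x y" using xs unfolding cayley_adj_def by auto
  thus "y \<in> burning G S F p (Suc n)" using y xs by auto
qed

lemma burn_card: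
  assumes S: "S \<subseteq> carrier G" "finite S" and F: "F \<subseteq> carrier G" "finite F"
    and v: "valid_strategy G S f F p"
  shows "real (card (burning G S F p (Suc n))) \<ge> real (card (burning G S F p n))
          + real (card (bdry G S (burning G S F p n))) - real (\<Sum>k\<in>{1..Suc n}. f k)"
proof -
  define B where "B = burning G S F p n"
  define P where "P = (\<Union>k\<in>{1..Suc n}. p k)"
  have Bf: "finite B" unfolding B_def using burn_finite S F by auto
  have Pf: "finite P" unfolding P_def using v unfolding valid_strategy_def by auto
  have cP: "card P \<le> (\<Sum>k\<in>{1..Suc n}. f k)"
  proof -
    have "card P \<le> (\<Sum>k\<in>{1..Suc n}. card (p k))" unfolding P_def by (rule card_UN_le) simp
    also have "\<dots> \<le> (\<Sum>k\<in>{1..Suc n}. f k)" using v unfolding valid_strategy_def by (intro sum_mono) auto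
    finally show ?thesis .
  qed
  have bf: "finite (bdry G S B)" using bdry_finite Bf S by auto
  have sub: "B \<union> (bdry G S B - P) \<subseteq> burning G S F p (Suc n)"
    using burn_step[OF S(1) F(1), of p n] burn_mono[of n "Suc n" S F p] unfolding B_def P_def by auto
  have "card B + card (bdry G S B - P) = card (B \<union> (bdry G S B - P))"
    using Bf bf by (intro card_Un_disjoint[symmetric]) (auto simp: bdry_def)
  also have "\<dots> \<le> card (burning G S F p (Suc n))"
    using sub burn_finite[OF F(2) S(2), of p "Suc n"] by (intro card_mono) (simp_all only:)
  finally have 1: "card B + card (bdry G S B - P) \<le> card (burning G S F p (Suc n))" .
  have 2: "card (bdry G S B) - card P \<le> card (bdry G S B - P)" by (rule diff_card_le_card_Diff) (rule Pf)
  have "real (card (bdry G S B)) - real (card P) \<le> real (card (bdry G S B - P))" using 2 by linarith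
  thus ?thesis using 1 cP unfolding B_def[symmetric] by linarith
qed

end


theorem theorem3:
  fixes G :: "('a, 'b) monoid_scheme" and S :: "'a set" and f :: "nat \<Rightarrow> nat"
    and \<alpha> \<beta> :: real
  assumes "group G"
    and "finite S" and "S \<subseteq> carrier G" and "\<forall>s\<in>S. inv\<^bsub>G\<^esub> s \<in> S"
    and "generate G S = carrier G"
    and "0 < \<alpha>" and "\<alpha> < 1"
    and "\<exists>C>0. \<forall>n::nat. exp (real n powr \<alpha>) \<le> C * real (vol_growth G S (nat \<lfloor>C * real n\<rfloor>))"
    and "\<beta> < \<alpha> / (\<alpha> + 1)"
    and "(\<lambda>n. real (f n)) \<in> o(\<lambda>n. exp (real n powr \<beta>))"
  shows "\<not> containment_property G S f"
proof
  assume cp: "containment_property G S f"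
  interpret group G by fact
  have Sf: "finite S" and Sc: "S \<subseteq> carrier G" and a0: "0 < \<alpha>" and a1: "\<alpha> < 1" using assms by auto
  obtain C where C0: "C > 0" and Cg: "\<And>n::nat. exp (real n powr \<alpha>) \<le> C * real (vol_growth G S (nat \<lfloor>C * real n\<rfloor>))"
    using assms(8) by auto
  have "eventually (\<lambda>n. norm (real (f n)) \<le> 1 * norm (exp (real n powr \<beta>))) sequentially"
    by (rule landau_o.smallD[OF assms(10)]) simp
  then obtain N0 where N0: "\<And>n. n \<ge> N0 \<Longrightarrow> real (f n) \<le> exp (real n powr \<beta>)"
    by (auto simp: eventually_sequentially)
  define a' where "a' = \<alpha> / (\<alpha> + 1)"
  define \<beta>1 where "\<beta>1 = (max \<beta> 0 + a') / 2"
  define \<gamma> where "\<gamma> = (\<beta>1 + a') / 2"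
  have a'0: "0 < a'" using a0 unfolding a'_def by simp
  have a'1: "a' < 1" using a0 unfolding a'_def by simp
  have b1: "0 < \<beta>1" "\<beta> \<le> \<beta>1" "\<beta>1 < \<gamma>" using a'0 assms(9) unfolding \<beta>1_def \<gamma>_def a'_def[symmetric] by auto
  have g1: "0 < \<gamma>" "\<gamma> < 1" "\<gamma> < a'" using b1 a'1 unfolding \<gamma>_def by auto
  have g2: "\<gamma> - 1 + \<gamma> / \<alpha> < 0"
  proof -
    have "\<gamma> * (\<alpha> + 1) < \<alpha>" using g1(3) a0 unfolding a'_def by (simp add: field_simps)
    hence "\<gamma> * \<alpha> + \<gamma> < \<alpha>" by (simp add: algebra_simps)
    hence "(\<gamma> * \<alpha> + \<gamma>) / \<alpha> < 1" using a0 by simp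
    moreover have "(\<gamma> * \<alpha> + \<gamma>) / \<alpha> = \<gamma> + \<gamma> / \<alpha>" using a0 by (simp add: field_simps)
    ultimately show ?thesis by simp
  qed
  define K0 where "K0 = (\<Sum>k<N0. real (f k))"
  have K0nn: "0 \<le> K0" unfolding K0_def by (intro sum_nonneg) auto
  define D where "D = (\<lambda>m::real. (2*(m+1) powr \<gamma>) powr (1/\<alpha>) + 1)"
  from analytic[OF a0 g1(1,2) g2 b1(1,3) C0, of K0]
  obtain M where M: "\<And>m. m \<ge> M \<Longrightarrow> exp ((m+1) powr \<gamma>) - exp (m powr \<gamma>) + K0 + (m+1) * exp ((m+1) powr \<beta>1)
            \<le> exp (m powr \<gamma>) / (2*C*D m) \<and> ln (2*C) \<le> (m+1) powr \<gamma> \<and> 1 \<le> m"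
    unfolding D_def by (auto simp: eventually_at_top_linorder)
  define T where "T = nat \<lceil>max M 1\<rceil>"
  have mT: "M \<le> real (n + T)" for n
  proof -
    have "max M 1 \<le> real T" unfolding T_def by (rule real_nat_ceiling_ge)
    thus ?thesis by simp
  qed
  define E where "E = (\<lambda>n. exp (real (n + T) powr \<gamma>))"
  have E1: "1 \<le> E n" for n unfolding E_def by simp
  have Phi: "real (\<Sum>k\<in>{1..Suc n}. f k) \<le> K0 + (real (n+T)+1) * exp ((real (n+T)+1) powr \<beta>1)" for n
  proof -
    define m where "m = real (n+T)"
    define Xv where "Xv = exp ((m+1) powr \<beta>1)"
    have pt: "real (f k) \<le> (if k < N0 then real (f k) else 0) + Xv" if k: "k \<in> {1..Suc n}" for k
    proof (cases "k < N0")
      case True then show ?thesis unfolding Xv_def by simp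
    next
      case False
      have k1: "1 \<le> real k" using k by simp
      have "real (f k) \<le> exp (real k powr \<beta>)" using N0 False by simp
      also have "\<dots> \<le> exp (real k powr \<beta>1)" using k1 b1 by (simp add: powr_mono)
      also have "\<dots> \<le> Xv" unfolding Xv_def m_def using k b1 by (auto intro!: powr_mono2)
      finally show ?thesis using False by simp
    qed
    have "real (\<Sum>k\<in>{1..Suc n}. f k) = (\<Sum>k\<in>{1..Suc n}. real (f k))" by simp
    also have "\<dots> \<le> (\<Sum>k\<in>{1..Suc n}. (if k < N0 then real (f k) else 0) + Xv)" using pt by (intro sum_mono) auto
    also have "\<dots> = (\<Sum>k\<in>{1..Suc n}. (if k < N0 then real (f k) else 0)) + real (Suc n) * Xv"
      by (simp add: sum.distrib)
    also have "(\<Sum>k\<in>{1..Suc n}. (if k < N0 then real (f k) else 0)) = (\<Sum>k\<in>{1..Suc n} \<inter> {..<N0}. real (f k))"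
      using sum.inter_restrict[of "{1..Suc n}" "\<lambda>k. real (f k)" "{..<N0}"] by simp
    also have "\<dots> \<le> K0" unfolding K0_def by (intro sum_mono2) auto
    also have "real (Suc n) * Xv \<le> (m+1) * Xv" unfolding m_def Xv_def by (intro mult_right_mono) auto
    finally show ?thesis unfolding m_def Xv_def by simp
  qed
  have "filterlim (\<lambda>k::nat. exp (real k powr \<alpha>)) at_top sequentially" using a0 by real_asymp
  then obtain k0 :: nat where k0: "C * E 0 \<le> exp (real k0 powr \<alpha>)"
    using filterlim_at_top[THEN iffD1, rule_format, of _ sequentially "C * E 0"] by (auto simp: eventually_sequentially)
  define F where "F = word_ball G S (nat \<lfloor>C * real k0\<rfloor>)"
  have Ff: "finite F" and Fc: "F \<subseteq> carrier G" unfolding F_def using wb_finite[OF Sf] wb_carrier[OF Sc] by auto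
  have FE: "E 0 \<le> real (card F)"
  proof -
    have "C * E 0 \<le> C * real (card F)" using k0 Cg[of k0] unfolding F_def vol_growth_def by simp
    thus ?thesis using C0 by simp
  qed
  from cp Ff Fc obtain p N where v: "valid_strategy G S f F p"
    and stab: "\<And>n. n \<ge> N \<Longrightarrow> burning G S F p n = burning G S F p N"
    unfolding containment_property_def by blast
  have claim: "E n \<le> real (card (burning G S F p n))" for n
  proof (induction n)
    case 0 then show ?case using FE by simp
  next
    case (Suc n)
    define B where "B = burning G S F p n"
    define b where "b = card B"
    have Bf: "finite B" and Bc: "B \<subseteq> carrier G" unfolding B_def
      using burn_finite[OF Ff Sf] burn_carrier[OF Sc Fc] by auto
    have bmono: "b \<le> card (burning G S F p (Suc n))" unfolding b_def B_def
      using card_mono[OF burn_finite[OF Ff Sf, of p "Suc n"] burn_mono[of n "Suc n" S F p]] by simp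
    show ?case
    proof (cases "E (Suc n) \<le> real b")
      case True then show ?thesis using bmono by linarith
    next
      case False
      define m where "m = real (n + T)"
      have Mm: "exp ((m+1) powr \<gamma>) - exp (m powr \<gamma>) + K0 + (m+1) * exp ((m+1) powr \<beta>1)
            \<le> exp (m powr \<gamma>) / (2*C*D m)" "ln (2*C) \<le> (m+1) powr \<gamma>" "1 \<le> m"
        using M[OF mT[of n]] unfolding m_def by auto
      have ESuc: "E (Suc n) = exp ((m+1) powr \<gamma>)" unfolding E_def m_def by (simp add: add.commute)
      have En: "E n = exp (m powr \<gamma>)" unfolding E_def m_def by simp
      define Xv where "Xv = (2*(m+1) powr \<gamma>) powr (1/\<alpha>)"
      have X0: "0 \<le> Xv" unfolding Xv_def by simp
      define k where "k = nat \<lceil>Xv\<rceil>"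
      define r where "r = nat \<lfloor>C * real k\<rfloor>"
      have hk: "Xv \<le> real k" unfolding k_def by (rule real_nat_ceiling_ge)
      have hk2: "real k \<le> Xv + 1" unfolding k_def using X0 by linarith
      have hka: "2*(m+1) powr \<gamma> \<le> real k powr \<alpha>"
      proof -
        have "Xv powr \<alpha> \<le> real k powr \<alpha>" using hk X0 a0 by (intro powr_mono2) auto
        moreover have "Xv powr \<alpha> = 2*(m+1) powr \<gamma>" unfolding Xv_def using a0 by (simp add: powr_powr)
        ultimately show ?thesis by simp
      qed
      have "2 * C * E (Suc n) \<le> exp (real k powr \<alpha>)"
      proof -
        have "2 * C \<le> exp ((m+1) powr \<gamma>)" using Mm(2) C0
          by (metis exp_le_cancel_iff exp_ln mult_pos_pos zero_less_numeral)
        hence "2 * C * E (Suc n) \<le> exp ((m+1) powr \<gamma>) * exp ((m+1) powr \<gamma>)"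
          unfolding ESuc by (intro mult_right_mono) auto
        also have "\<dots> = exp (2*(m+1) powr \<gamma>)" by (simp add: exp_add[symmetric])
        also have "\<dots> \<le> exp (real k powr \<alpha>)" using hka by simp
        finally show ?thesis .
      qed
      also have "\<dots> \<le> C * real (vol_growth G S r)" unfolding r_def by (rule Cg)
      finally have hV: "2 * E (Suc n) \<le> real (vol_growth G S r)" using C0 by simp
      have hV': "2 * b \<le> vol_growth G S r" using hV False by linarith
      have iso: "b \<le> 2 * r * card (bdry G S B)" unfolding b_def
        using isoperimetric[OF Sc Sf Bc Bf] hV' unfolding b_def by simp
      have r0: "r > 0"
      proof (rule ccontr)
        assume "\<not> r > 0"
        hence "vol_growth G S r = 1" by (simp add: vol_growth_def)
        thus False using hV E1[of "Suc n"] by simp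
      qed
      have hr: "real r \<le> C * D m"
      proof -
        have "real r \<le> C * real k" unfolding r_def using C0 by (intro of_nat_floor) simp
        also have "\<dots> \<le> C * (Xv + 1)" using hk2 C0 by simp
        finally show ?thesis unfolding D_def Xv_def by simp
      qed
      have Dpos: "D m > 0" unfolding D_def by (simp add: add_nonneg_pos)
      have cb: "E n / (2 * C * D m) \<le> real (card (bdry G S B))"
      proof -
        have "E n \<le> real b" using Suc.IH unfolding b_def B_def .
        also have "\<dots> \<le> 2 * real r * real (card (bdry G S B))" using iso by (metis of_nat_le_iff of_nat_mult of_nat_numeral)
        finally have "E n \<le> 2 * real r * real (card (bdry G S B))" .
        moreover have "2 * real r * real (card (bdry G S B)) \<le> 2 * (C * D m) * real (card (bdry G S B))"
          using hr by (intro mult_right_mono) auto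
        ultimately have "E n \<le> (2 * C * D m) * real (card (bdry G S B))" by simp
        thus ?thesis using C0 Dpos by (simp add: divide_le_eq mult.commute)
      qed
      
      have "E (Suc n) \<le> E n + E n / (2 * C * D m) - (K0 + (m+1) * exp ((m+1) powr \<beta>1))"
        unfolding ESuc En using Mm(1) by linarith
      also have "\<dots> \<le> real b + real (card (bdry G S B)) - real (\<Sum>k\<in>{1..Suc n}. f k)"
        using Suc.IH cb Phi[of n] unfolding b_def B_def m_def by linarith
      also have "\<dots> \<le> real (card (burning G S F p (Suc n)))"
        using burn_card[OF Sc Sf Fc Ff v, of n] unfolding b_def B_def by linarith
      finally show ?thesis .
    qed
  qed
  have "filterlim E at_top sequentially" unfolding E_def using g1 by real_asymp
  hence "eventually (\<lambda>n. real (card (burning G S F p N)) + 1 \<le> E n) sequentially"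
    by (rule filterlim_at_top[THEN iffD1, rule_format])
  then obtain Na where Na: "\<And>n. n \<ge> Na \<Longrightarrow> real (card (burning G S F p N)) + 1 \<le> E n"
    by (auto simp: eventually_sequentially)
  define n where "n = max N Na"
  have n: "n \<ge> N" "real (card (burning G S F p N)) + 1 \<le> E n" using Na[of n] unfolding n_def by auto
  show False using claim[of n] stab[OF n(1)] n(2) by simp
qed


end
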